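(* Let $(A,\mathfrak m)$ be a local Prüfer ring, $B$ a ring, $f : A \to B$ a ring homomorphism and $J$ a proper ideal of $B$ with $J \subseteq \mathrm{Rad}(B)$. Assume that $J \subseteq f(A)$, $f^{-1}(J) \subseteq Z(A)$ and $f(\mathrm{Reg}(A)) \subseteq \mathrm{Reg}(B)$. Then $Z(A \bowtie^f J) = Z(A) \bowtie^f J$.
   Context: All rings are commutative with identity. For a ring homomorphism $f:A\to B$ and an ideal $J$ of $B$, $A \bowtie^f J := \{(a, f(a)+j) : a \in A, j \in J\}$, a subring of $A\times B$, and for $S\subseteq A$, $S\bowtie^f J := \{(a,f(a)+j): a\in S, j\in J\}$. $Z(R)$ is the set of zero-divisors of $R$, $\mathrm{Reg}(R)=R\setminus Z(R)$, $\mathrm{Rad}(B)$ is the Jacobson radical of $B$. An ideal is regular if it contains a regular element. A ring $R$ is a Prüfer ring if every finitely generated regular ideal of $R$ is invertible. *)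

theory Defs
  imports Main
begin

definition is_ideal :: "'a::comm_ring_1 set \<Rightarrow> bool" where
  "is_ideal I \<longleftrightarrow> 0 \<in> I \<and> (\<forall>x\<in>I. \<forall>y\<in>I. x + y \<in> I) \<and> (\<forall>r. \<forall>x\<in>I. r * x \<in> I)"

definition maximal_ideal :: "'a::comm_ring_1 set \<Rightarrow> bool" where
  "maximal_ideal M \<longleftrightarrow> is_ideal M \<and> M \<noteq> UNIV \<and>
     (\<forall>I. is_ideal I \<and> M \<subseteq> I \<longrightarrow> I = M \<or> I = UNIV)"

definition local_ring_with :: "'a::comm_ring_1 set \<Rightarrow> bool" where
  "local_ring_with m \<longleftrightarrow> maximal_ideal m \<and> (\<forall>M. maximal_ideal M \<longrightarrow> M = m)"

definition jacobson_rad :: "'a::comm_ring_1 set" where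
  "jacobson_rad = \<Inter> {M. maximal_ideal M}"

definition zero_divisors :: "'a::comm_ring_1 set" where
  "zero_divisors = {z. \<exists>y. y \<noteq> 0 \<and> z * y = 0}"

definition regular_elems :: "'a::comm_ring_1 set" where
  "regular_elems = UNIV - zero_divisors"

definition regular_ideal :: "'a::comm_ring_1 set \<Rightarrow> bool" where
  "regular_ideal I \<longleftrightarrow> I \<inter> regular_elems \<noteq> {}"

definition fin_gen_ideal :: "'a::comm_ring_1 set \<Rightarrow> bool" where
  "fin_gen_ideal I \<longleftrightarrow> (\<exists>S. finite S \<and> I = {\<Sum>s\<in>S. c s * s | c. True})"

text \<open>Invertible ideal: I (R:I) = R in the total ring of quotients Q(R).
  Elements of (R:I) are fractions a/s (s regular) with (a/s) I \<subseteq> R, i.e. s divides a*x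
  for all x in I. Writing a finite sum of products of elements of I and of (R:I)
  over a common regular denominator s, the condition 1 \<in> I (R:I) reads as below
  (I (R:I) \<subseteq> R holds automatically).\<close>
definition invertible_ideal :: "'a::comm_ring_1 set \<Rightarrow> bool" where
  "invertible_ideal I \<longleftrightarrow>
     (\<exists>s n (xs :: nat \<Rightarrow> 'a) as. s \<in> regular_elems \<and>
        (\<forall>k<n. xs k \<in> I \<and> (\<forall>x\<in>I. s dvd as k * x)) \<and>
        (\<Sum>k<n. xs k * as k) = s)"

definition pruefer_ring :: "'a::comm_ring_1 itself \<Rightarrow> bool" where
  "pruefer_ring _ \<longleftrightarrow> (\<forall>I::'a set. is_ideal I \<and> fin_gen_ideal I \<and> regular_ideal I \<longrightarrow> invertible_ideal I)"

definition ring_hom :: "('a::comm_ring_1 \<Rightarrow> 'b::comm_ring_1) \<Rightarrow> bool" where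
  "ring_hom f \<longleftrightarrow> f 1 = 1 \<and> (\<forall>x y. f (x + y) = f x + f y) \<and> (\<forall>x y. f (x * y) = f x * f y)"

definition amalg :: "'a set \<Rightarrow> ('a \<Rightarrow> 'b::plus) \<Rightarrow> 'b set \<Rightarrow> ('a \<times> 'b) set" where
  "amalg S f J = {(a, f a + j) | a j. a \<in> S \<and> j \<in> J}"

definition zero_divisors_prod :: "('a::comm_ring_1 \<times> 'b::comm_ring_1) set \<Rightarrow> ('a \<times> 'b) set" where
  "zero_divisors_prod R = {(a, b) \<in> R. \<exists>(c, d) \<in> R. (c, d) \<noteq> (0, 0) \<and> a * c = 0 \<and> b * d = 0}"

end

theory Submission
  imports Defs
begin

lemma ideal_sum:
  assumes "is_ideal I" "\<forall>k<(n::nat). g k \<in> I"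
  shows "(\<Sum>k<n. g k) \<in> I"
  using assms(2)
proof (induction n arbitrary: g)
  case 0 then show ?case using assms(1) by (simp add: is_ideal_def)
next
  case (Suc n) then show ?case using assms(1) by (simp add: is_ideal_def)
qed

lemma ideal_one:
  assumes "is_ideal I" "(1::'a::comm_ring_1) \<in> I" shows "I = UNIV"
proof -
  have "\<And>y. y * 1 \<in> I" using assms unfolding is_ideal_def by blast
  then show ?thesis by auto
qed

lemma nonunit_in_m:
  fixes x :: "'a::comm_ring_1"
  assumes loc: "local_ring_with m" and nu: "\<not> x dvd 1"
  shows "x \<in> m"
proof -
  define A where "A = {I::'a set. is_ideal I \<and> x \<in> I \<and> 1 \<notin> I}"
  define P where "P = {r * x | r. True}"
  have P_id: "is_ideal P" unfolding is_ideal_def P_def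
    by (auto intro: exI[of _ 0] simp: distrib_right[symmetric] mult.assoc[symmetric])
  have "x \<in> P" unfolding P_def by (auto intro: exI[of _ 1])
  moreover have "1 \<notin> P" using nu unfolding P_def by (auto simp: dvd_def mult.commute)
  ultimately have "P \<in> A" using P_id unfolding A_def by blast
  hence "A \<noteq> {}" by blast
  have "\<Union>C \<in> A" if Cne: "C \<noteq> {}" and Cch: "subset.chain A C" for C
  proof -
    have CA: "C \<subseteq> A" and ch: "\<forall>X\<in>C. \<forall>Y\<in>C. X \<subseteq> Y \<or> Y \<subseteq> X"
      using Cch by (auto simp: subset_chain_def)
    obtain X0 where X0: "X0 \<in> C" using Cne by blast
    have id: "is_ideal X" if "X \<in> C" for X using CA that unfolding A_def by blast
    have "is_ideal (\<Union>C)" unfolding is_ideal_def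
    proof (intro conjI ballI allI)
      show "0 \<in> \<Union>C" using id[OF X0] X0 unfolding is_ideal_def by blast
    next
      fix u v assume "u \<in> \<Union>C" "v \<in> \<Union>C"
      then obtain X Y where XY: "X \<in> C" "Y \<in> C" "u \<in> X" "v \<in> Y" by blast
      show "u + v \<in> \<Union>C"
      proof (cases "X \<subseteq> Y")
        case True then show ?thesis using XY id[of Y] unfolding is_ideal_def by blast
      next
        case False then have "Y \<subseteq> X" using ch XY by blast
        then show ?thesis using XY id[of X] unfolding is_ideal_def by blast
      qed
    next
      fix r u assume "u \<in> \<Union>C"
      then obtain X where "X \<in> C" "u \<in> X" by blast
      then show "r * u \<in> \<Union>C" using id[of X] unfolding is_ideal_def by blast
    qed
    moreover have "x \<in> \<Union>C" using X0 CA unfolding A_def by blast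
    moreover have "1 \<notin> \<Union>C" using CA unfolding A_def by blast
    ultimately show ?thesis unfolding A_def by blast
  qed
  then obtain M where M: "M \<in> A" and Mmax: "\<forall>X\<in>A. M \<subseteq> X \<longrightarrow> X = M"
    using subset_Zorn_nonempty[OF \<open>A \<noteq> {}\<close>] by blast
  have "maximal_ideal M" unfolding maximal_ideal_def
  proof (intro conjI allI impI)
    show "is_ideal M" using M unfolding A_def by blast
    show "M \<noteq> UNIV" using M unfolding A_def by blast
    fix I assume I: "is_ideal I \<and> M \<subseteq> I"
    show "I = M \<or> I = UNIV"
    proof (cases "1 \<in> I")
      case True then show ?thesis using ideal_one I by blast
    next
      case False
      then have "I \<in> A" using I M unfolding A_def by blast
      then show ?thesis using Mmax I by blast
    qed
  qed
  then have "M = m" using loc unfolding local_ring_with_def by blast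
  then show ?thesis using M unfolding A_def by blast
qed

lemma one_notin_m:
  assumes "local_ring_with m" shows "(1::'a::comm_ring_1) \<notin> m"
  using assms ideal_one unfolding local_ring_with_def maximal_ideal_def by blast

lemma notin_m_unit:
  fixes x :: "'a::comm_ring_1"
  assumes "local_ring_with m" "x \<notin> m" shows "x dvd 1"
  using nonunit_in_m assms by blast

lemma zd_in_m:
  fixes z :: "'a::comm_ring_1"
  assumes loc: "local_ring_with m" and z: "z \<in> zero_divisors"
  shows "z \<in> m"
proof (rule ccontr)
  assume "z \<notin> m"
  then obtain w where w: "1 = z * w" using notin_m_unit[OF loc] by (auto simp: dvd_def)
  obtain y where y: "y \<noteq> 0" "z * y = 0" using z unfolding zero_divisors_def by blast
  have "y = (z * w) * y" using w[symmetric] by simp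
  also have "\<dots> = w * (z * y)" by (simp add: ac_simps)
  finally have "y = w * (z * y)" .
  then show False using y by simp
qed

lemma m_ideal: "local_ring_with m \<Longrightarrow> is_ideal m"
  unfolding local_ring_with_def maximal_ideal_def by blast

lemma m_mult: "local_ring_with m \<Longrightarrow> y \<in> m \<Longrightarrow> x * y \<in> m"
  using m_ideal unfolding is_ideal_def by blast

lemma m_add: "local_ring_with m \<Longrightarrow> x \<in> m \<Longrightarrow> y \<in> m \<Longrightarrow> x + y \<in> m"
  using m_ideal unfolding is_ideal_def by blast

lemma one_plus_notin:
  fixes r :: "'a::comm_ring_1"
  assumes loc: "local_ring_with m" and r: "r \<in> m"
  shows "1 + r \<notin> m"
proof
  assume "1 + r \<in> m"
  moreover have "(-1) * r \<in> m" using m_mult[OF loc r] .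
  ultimately have "(1 + r) + (-1) * r \<in> m" using m_add[OF loc] by blast
  then show False using one_notin_m[OF loc] by simp
qed

lemma reg_iff: "x \<in> regular_elems \<longleftrightarrow> (\<forall>y. x * y = 0 \<longrightarrow> y = 0)"
  unfolding regular_elems_def zero_divisors_def by blast

lemma reg_cancel:
  assumes "s \<in> regular_elems" "s * x = s * y" shows "x = y"
proof -
  have "s * (x - y) = 0" using assms(2) by (simp add: right_diff_distrib)
  then show ?thesis using assms(1) reg_iff by fastforce
qed

lemma key:
  fixes a b :: "'a::comm_ring_1" and m :: "'a set"
  assumes loc: "local_ring_with m" and pr: "pruefer_ring TYPE('a)"
    and a: "a \<in> regular_elems" and b: "b \<in> zero_divisors"
  shows "a + b \<in> regular_elems"
proof -
  have ab: "a \<noteq> b" using a b unfolding regular_elems_def by blast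
  obtain y0 where y0: "y0 \<noteq> 0" "b * y0 = 0" using b unfolding zero_divisors_def by blast
  define I where "I = {p * a + q * b | p q. True}"
  have Ieq: "I = {\<Sum>s\<in>{a,b}. c s * s | c. True}"
  proof
    show "I \<subseteq> {\<Sum>s\<in>{a,b}. c s * s | c. True}"
    proof
      fix x assume "x \<in> I"
      then obtain p q where x: "x = p * a + q * b" unfolding I_def by blast
      have "x = (\<Sum>s\<in>{a,b}. (\<lambda>s. if s = a then p else q) s * s)" using ab x by simp
      then show "x \<in> {\<Sum>s\<in>{a,b}. c s * s | c. True}" by (rule_tac CollectI, rule_tac exI[of _ "\<lambda>s. if s = a then p else q"]) simp
    qed
  next
    show "{\<Sum>s\<in>{a,b}. c s * s | c. True} \<subseteq> I" using ab unfolding I_def by auto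
  qed
  have fg: "fin_gen_ideal I" unfolding fin_gen_ideal_def
    by (rule exI[of _ "{a,b}"], rule conjI, simp, rule Ieq)
  have idI: "is_ideal I" unfolding is_ideal_def I_def
  proof (intro conjI ballI allI)
    show "0 \<in> {p * a + q * b |p q. True}" by (rule CollectI, rule exI[of _ 0], rule exI[of _ 0]) simp
  next
    fix x y assume "x \<in> {p * a + q * b |p q. True}" "y \<in> {p * a + q * b |p q. True}"
    then obtain p q p' q' where "x = p * a + q * b" "y = p' * a + q' * b" by blast
    then have "x + y = (p + p') * a + (q + q') * b" by (simp add: algebra_simps)
    then show "x + y \<in> {p * a + q * b |p q. True}" by blast
  next
    fix r x assume "x \<in> {p * a + q * b |p q. True}"
    then obtain p q where "x = p * a + q * b" by blast
    then have "r * x = (r * p) * a + (r * q) * b" by (simp add: algebra_simps)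
    then show "r * x \<in> {p * a + q * b |p q. True}" by blast
  qed
  have "a \<in> I" unfolding I_def by (rule CollectI, rule exI[of _ 1], rule exI[of _ 0]) simp
  then have "regular_ideal I" using a unfolding regular_ideal_def by blast
  then have "invertible_ideal I" using pr idI fg unfolding pruefer_ring_def by blast
  then obtain s and n :: nat and xs as :: "nat \<Rightarrow> 'a" where s: "s \<in> regular_elems"
    and xsdv: "\<forall>k<n. xs k \<in> I \<and> (\<forall>x\<in>I. s dvd as k * x)"
    and sum: "(\<Sum>k<n. xs k * as k) = s"
    unfolding invertible_ideal_def by blast
  have xsI: "\<forall>k<n. xs k \<in> I" and dv: "\<forall>k<n. \<forall>x\<in>I. s dvd as k * x" using xsdv by auto
  have "\<forall>k. \<exists>pq. k < n \<longrightarrow> xs k = fst pq * a + snd pq * b"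
  proof
    fix k show "\<exists>pq. k < n \<longrightarrow> xs k = fst pq * a + snd pq * b"
    proof (cases "k < n")
      case True
      then obtain p q where "xs k = p * a + q * b" using xsI unfolding I_def by blast
      then show ?thesis by (intro exI[of _ "(p, q)"]) simp
    qed simp
  qed
  then obtain pq where pq: "\<forall>k. k < n \<longrightarrow> xs k = fst (pq k) * a + snd (pq k) * b"
    by (rule choice[THEN exE])
  define \<alpha> where "\<alpha> = (\<lambda>k. fst (pq k))"
  define \<beta> where "\<beta> = (\<lambda>k. snd (pq k))"
  have \<alpha>\<beta>: "\<forall>k. k < n \<longrightarrow> xs k = \<alpha> k * a + \<beta> k * b" using pq unfolding \<alpha>_def \<beta>_def by blast
  have bI: "b \<in> I" unfolding I_def by (rule CollectI, rule exI[of _ 0], rule exI[of _ 1]) simp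
  have "\<forall>k. \<exists>uv. k < n \<longrightarrow> as k * a = s * fst uv \<and> as k * b = s * snd uv"
  proof
    fix k show "\<exists>uv. k < n \<longrightarrow> as k * a = s * fst uv \<and> as k * b = s * snd uv"
    proof (cases "k < n")
      case True
      then have "s dvd as k * a" "s dvd as k * b" using dv \<open>a \<in> I\<close> bI by auto
      then obtain u' v' where "as k * a = s * u'" "as k * b = s * v'" by (auto elim!: dvdE)
      then show ?thesis by (intro exI[of _ "(u', v')"]) simp
    qed simp
  qed
  then obtain uv where uv0: "\<forall>k. k < n \<longrightarrow> as k * a = s * fst (uv k) \<and> as k * b = s * snd (uv k)"
    by (rule choice[THEN exE])
  define u where "u = (\<lambda>k. fst (uv k))"
  define v where "v = (\<lambda>k. snd (uv k))"
  have uv: "\<forall>k. k < n \<longrightarrow> as k * a = s * u k \<and> as k * b = s * v k" using uv0 unfolding u_def v_def by blast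
  have "(\<Sum>k<n. xs k * as k) = (\<Sum>k<n. s * (\<alpha> k * u k + \<beta> k * v k))"
  proof (rule sum.cong)
    fix k assume "k \<in> {..<n}"
    then have xk: "xs k = \<alpha> k * a + \<beta> k * b" and "as k * a = s * u k" "as k * b = s * v k"
      using \<alpha>\<beta> uv by auto
    have "xs k * as k = \<alpha> k * (as k * a) + \<beta> k * (as k * b)"
      unfolding xk by (simp add: algebra_simps)
    also have "\<dots> = s * (\<alpha> k * u k + \<beta> k * v k)"
    proof -
      have e1: "\<alpha> k * (as k * a) = s * (\<alpha> k * u k)"
        unfolding \<open>as k * a = s * u k\<close> by (simp add: ac_simps)
      have e2: "\<beta> k * (as k * b) = s * (\<beta> k * v k)"
        unfolding \<open>as k * b = s * v k\<close> by (simp add: ac_simps)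
      show ?thesis unfolding e1 e2 by (simp add: distrib_left)
    qed
    finally show "xs k * as k = s * (\<alpha> k * u k + \<beta> k * v k)" .
  qed simp
  also have "\<dots> = s * (\<Sum>k<n. \<alpha> k * u k + \<beta> k * v k)" by (simp add: sum_distrib_left)
  finally have "s * 1 = s * (\<Sum>k<n. \<alpha> k * u k + \<beta> k * v k)" using sum by simp
  then have one: "(\<Sum>k<n. \<alpha> k * u k + \<beta> k * v k) = 1" by (rule reg_cancel[OF s, THEN sym])
  have "\<exists>k<n. \<alpha> k * u k \<notin> m \<or> \<beta> k * v k \<notin> m"
  proof (rule ccontr)
    assume "\<not> ?thesis"
    then have "\<forall>k<n. \<alpha> k * u k + \<beta> k * v k \<in> m" using m_add[OF loc] by auto
    then have "(\<Sum>k<n. \<alpha> k * u k + \<beta> k * v k) \<in> m" by (rule ideal_sum[OF m_ideal[OF loc]])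
    then show False using one one_notin_m[OF loc] by simp
  qed
  then obtain k where k: "k < n" and kk: "\<alpha> k * u k \<notin> m \<or> \<beta> k * v k \<notin> m" by blast
  have ua: "as k * a = s * u k" and vb: "as k * b = s * v k" using uv k by auto
  show ?thesis
  proof (cases "\<beta> k * v k \<notin> m")
    case True
    then have vm: "v k \<notin> m" using m_mult[OF loc] by blast
    have "s * (v k * y0) = as k * b * y0" using vb by (simp add: mult.assoc)
    then have "s * (v k * y0) = 0" using y0 by (simp add: mult.assoc)
    then have "v k * y0 = 0" using s reg_iff by blast
    then have "v k \<in> zero_divisors" using y0 unfolding zero_divisors_def by blast
    then show ?thesis using zd_in_m[OF loc] vm by blast
  next
    case False
    then have "\<alpha> k * u k \<notin> m" using kk by blast
    then have "u k \<notin> m" using m_mult[OF loc] by blast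
    then obtain w where w: "1 = u k * w" using notin_m_unit[OF loc] by (auto simp: dvd_def)
    have "s * (u k * b) = (as k * a) * b" using ua by (simp add: ac_simps)
    also have "\<dots> = a * (as k * b)" by (simp add: ac_simps)
    also have "\<dots> = s * (a * v k)" using vb by (simp add: ac_simps)
    finally have "s * (u k * b) = s * (a * v k)" .
    then have ub: "u k * b = a * v k" using reg_cancel[OF s] by blast
    define r where "r = v k * w"
    have "b = (u k * w) * b" using w[symmetric] by simp
    also have "\<dots> = w * (u k * b)" by (simp add: ac_simps)
    also have "\<dots> = a * r" unfolding r_def using ub by (simp add: ac_simps)
    finally have br: "b = a * r" .
    have "a * (r * y0) = 0" using br y0 by (simp add: mult.assoc)
    then have "r * y0 = 0" using a reg_iff by blast
    then have "r \<in> m" using zd_in_m[OF loc] y0 unfolding zero_divisors_def by blast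
    then have "1 + r \<notin> m" using one_plus_notin[OF loc] by blast
    then obtain t where t: "1 = (1 + r) * t" using notin_m_unit[OF loc] by (auto simp: dvd_def)
    show ?thesis unfolding reg_iff
    proof (intro allI impI)
      fix z assume "(a + b) * z = 0"
      then have "a * ((1 + r) * z) = 0" using br by (simp add: algebra_simps)
      then have "(1 + r) * z = 0" using a reg_iff by blast
      have "z = ((1 + r) * t) * z" using t[symmetric] by simp
      also have "\<dots> = t * ((1 + r) * z)" by (simp add: ac_simps)
      finally show "z = 0" using \<open>(1 + r) * z = 0\<close> by simp
    qed
  qed
qed

lemma hom0: assumes "ring_hom f" shows "f 0 = 0"
proof -
  have "f (0 + 0) = f 0 + f 0" using assms unfolding ring_hom_def by blast
  then show ?thesis by simp
qed

theorem lemma2p6: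
  fixes f :: "'a::comm_ring_1 \<Rightarrow> 'b::comm_ring_1"
    and m :: "'a set" and J :: "'b set"
  assumes "local_ring_with m"
    and "pruefer_ring TYPE('a)"
    and "ring_hom f"
    and "is_ideal J" and "J \<noteq> UNIV"
    and "J \<subseteq> jacobson_rad"
    and "J \<subseteq> range f"
    and "f -` J \<subseteq> zero_divisors"
    and "f ` regular_elems \<subseteq> regular_elems"
  shows "zero_divisors_prod (amalg UNIV f J) = amalg zero_divisors f J"
proof
  show "zero_divisors_prod (amalg UNIV f J) \<subseteq> amalg zero_divisors f J"
  proof
    fix p assume p: "p \<in> zero_divisors_prod (amalg UNIV f J)"
    then obtain a j where pa: "p = (a, f a + j)" "j \<in> J"
      unfolding zero_divisors_prod_def amalg_def by blast
    obtain c d where cd: "(c, d) \<in> amalg UNIV f J" "(c, d) \<noteq> (0, 0)" "a * c = 0" "(f a + j) * d = 0"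
      using p pa unfolding zero_divisors_prod_def by blast
    obtain c' k where ck: "c = c'" "d = f c' + k" "k \<in> J" using cd(1) unfolding amalg_def by blast
    have "a \<in> zero_divisors"
    proof (rule ccontr)
      assume na: "a \<notin> zero_divisors"
      then have areg: "a \<in> regular_elems" unfolding regular_elems_def by blast
      then have "c = 0" using cd(3) reg_iff by blast
      then have dk: "d = k" using ck hom0[OF assms(3)] by simp
      then have "k \<noteq> 0" using cd(2) \<open>c = 0\<close> by simp
      obtain a' where a': "j = f a'" using pa(2) assms(7) by blast
      then have "a' \<in> zero_divisors" using pa(2) assms(8) by blast
      then have "a + a' \<in> regular_elems" using key[OF assms(1,2) areg] by blast
      then have "f (a + a') \<in> regular_elems" using assms(9) by blast
      moreover have "f (a + a') = f a + j" using a' assms(3) unfolding ring_hom_def by simp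
      ultimately have "f a + j \<in> regular_elems" by simp
      then show False using cd(4) dk \<open>k \<noteq> 0\<close> reg_iff by blast
    qed
    then show "p \<in> amalg zero_divisors f J" using pa unfolding amalg_def by blast
  qed
next
  show "amalg zero_divisors f J \<subseteq> zero_divisors_prod (amalg UNIV f J)"
  proof
    fix p assume "p \<in> amalg zero_divisors f J"
    then obtain a j where pa: "p = (a, f a + j)" "j \<in> J" "a \<in> zero_divisors"
      unfolding amalg_def by blast
    obtain c where c: "c \<noteq> 0" "a * c = 0" using pa(3) unfolding zero_divisors_def by blast
    obtain a' where a': "j = f a'" using pa(2) assms(7) by blast
    have hm: "\<And>x y. f (x * y) = f x * f y" and ha: "\<And>x y. f (x + y) = f x + f y"
      using assms(3) unfolding ring_hom_def by auto
    have pin: "p \<in> amalg UNIV f J" using pa unfolding amalg_def by blast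
    show "p \<in> zero_divisors_prod (amalg UNIV f J)"
    proof (cases "a' * c = 0")
      case True
      have "(c, f c) = (c, f c + 0)" by simp
      moreover have "0 \<in> J" using assms(4) unfolding is_ideal_def by blast
      ultimately have cin: "(c, f c) \<in> amalg UNIV f J" unfolding amalg_def by blast
      have "(f a + j) * f c = f (a * c + a' * c)" using a' hm ha by (simp add: distrib_right)
      then have "(f a + j) * f c = 0" using True c hom0[OF assms(3)] by simp
      then show ?thesis using pin cin c pa(1) unfolding zero_divisors_prod_def by blast
    next
      case False
      have "f c * j \<in> J" using assms(4) pa(2) unfolding is_ideal_def by blast
      then have "(-1) * (f c * j) \<in> J" using assms(4) unfolding is_ideal_def by blast
      moreover have "(-1) * (f c * j) = - f (a' * c)" using a' hm by (simp add: mult.commute)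
      ultimately have "- f (a' * c) \<in> J" by simp
      moreover have "(a' * c, 0) = (a' * c, f (a' * c) + - f (a' * c))" by simp
      ultimately have cin: "(a' * c, 0) \<in> amalg UNIV f J" unfolding amalg_def by blast
      have "a * (a' * c) = a' * (a * c)" by (simp add: ac_simps)
      then have "a * (a' * c) = 0" using c by simp
      moreover have "(a' * c, (0::'b)) \<noteq> (0, 0)" using False by simp
      moreover have "(f a + j) * 0 = 0" by simp
      ultimately show ?thesis using pin cin pa(1) unfolding zero_divisors_prod_def by blast
    qed
  qed
qed

end
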